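(* Let $m,n$ be relatively prime positive integers and $\pi$ an $(m,n)$-Dyck path. Then \[ \frac{(m-1)(n-1)}{2} \;=\; h_+(\pi)+\sum_{p\in i(\pi)} k(p). \]
   Context: An $(m,n)$-Dyck path is a lattice path from $(0,0)$ to $(m,n)$ with steps $(1,0)$ (horizontal) and $(0,1)$ (vertical) staying weakly above the diagonal $y=\frac nm x$. "The line through a point $p$" means the line through $p$ parallel to the diagonal. For a lattice point $p$, $k(p)$ is the number of vertical steps of $\pi$ not containing $p$ that the line through $p$ intersects. $i(\pi)$ is the set of lattice points lying strictly between $\pi$ and the diagonal. $h_+(\pi)$ is the number of pairs $(s_1,s_2)$ with $s_1$ a horizontal step, $s_2$ a vertical step of $\pi$, $s_1$ to the left of $s_2$, such that some line parallel to the diagonal intersects both $s_1$ and $s_2$. *)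

theory Defs
  imports Complex_Main
begin

text \<open>A lattice path is a list of steps: True = vertical step (0,1), False = horizontal step (1,0).
  The path starts at (0,0); vertex j is the lattice point reached after the first j steps,
  and step j (for j < length w) goes from vertex j to vertex (Suc j).\<close>

definition vertex :: "bool list \<Rightarrow> nat \<Rightarrow> int \<times> int" where
  "vertex w j = (int (length (filter Not (take j w))), int (length (filter id (take j w))))"

definition dyck_path :: "nat \<Rightarrow> nat \<Rightarrow> bool list \<Rightarrow> bool" where
  "dyck_path m n w \<longleftrightarrow>
     length (filter Not w) = m \<and> length (filter id w) = n \<and>
     (\<forall>j \<le> length w. int n * fst (vertex w j) \<le> int m * snd (vertex w j))"

definition vsteps :: "bool list \<Rightarrow> nat set" where
  "vsteps w = {j. j < length w \<and> w ! j}"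

definition hsteps :: "bool list \<Rightarrow> nat set" where
  "hsteps w = {j. j < length w \<and> \<not> w ! j}"

definition rpt :: "int \<times> int \<Rightarrow> real \<times> real" where
  "rpt p = (real_of_int (fst p), real_of_int (snd p))"

definition step_seg :: "bool list \<Rightarrow> nat \<Rightarrow> (real \<times> real) set" where
  "step_seg w j =
     (let a = real_of_int (fst (vertex w j)); b = real_of_int (snd (vertex w j)) in
      if w ! j then {(a, y) | y. b \<le> y \<and> y \<le> b + 1}
      else {(x, b) | x. a \<le> x \<and> x \<le> a + 1})"

definition diag_line :: "nat \<Rightarrow> nat \<Rightarrow> real \<times> real \<Rightarrow> (real \<times> real) set" where
  "diag_line m n q = {r. real m * (snd r - snd q) = real n * (fst r - fst q)}"

definition kval :: "nat \<Rightarrow> nat \<Rightarrow> bool list \<Rightarrow> int \<times> int \<Rightarrow> nat" where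
  "kval m n w p = card {j \<in> vsteps w. rpt p \<notin> step_seg w j \<and>
                                    diag_line m n (rpt p) \<inter> step_seg w j \<noteq> {}}"

text \<open>i(pi): lattice points strictly between the path and the diagonal, i.e. strictly above
  the diagonal and strictly below the horizontal step of the path ending at the same abscissa.\<close>
definition interior_pts :: "nat \<Rightarrow> nat \<Rightarrow> bool list \<Rightarrow> (int \<times> int) set" where
  "interior_pts m n w = {p. int n * fst p < int m * snd p \<and>
      (\<exists>j \<in> hsteps w. fst (vertex w (Suc j)) = fst p \<and> snd p < snd (vertex w j))}"

definition h_plus :: "nat \<Rightarrow> nat \<Rightarrow> bool list \<Rightarrow> nat" where
  "h_plus m n w = card {(j1, j2). j1 \<in> hsteps w \<and> j2 \<in> vsteps w \<and>
      fst (vertex w j1) + 1 \<le> fst (vertex w j2) \<and>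
      (\<exists>q. diag_line m n q \<inter> step_seg w j1 \<noteq> {} \<and> diag_line m n q \<inter> step_seg w j2 \<noteq> {})}"

end

theory Submission
  imports Defs
begin

definition lv :: "nat \<Rightarrow> nat \<Rightarrow> bool list \<Rightarrow> nat \<Rightarrow> int" where
  "lv m n w k = int m * snd (vertex w k) - int n * fst (vertex w k)"

lemma vertex_0[simp]: "vertex w 0 = (0,0)"
  by (simp add: vertex_def)

lemma vertex_Suc:
  assumes "k < length w"
  shows "vertex w (Suc k) = (if w!k then (fst (vertex w k), snd (vertex w k) + 1)
                             else (fst (vertex w k) + 1, snd (vertex w k)))"
  using assms by (simp add: vertex_def take_Suc_conv_app_nth)

lemma vertex_ge: "length w \<le> k \<Longrightarrow> vertex w k = vertex w (length w)"
  by (simp add: vertex_def)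

lemma vertex_sum: "fst (vertex w k) + snd (vertex w k) = int (min k (length w))"
proof -
  have "length (filter Not (take k w)) + length (filter id (take k w)) = length (take k w)"
    using sum_length_filter_compl[of id "take k w"] by (simp add: comp_def)
  then show ?thesis by (simp add: vertex_def)
qed

lemma vertex_mono:
  assumes "k \<le> l"
  shows "fst (vertex w k) \<le> fst (vertex w l) \<and> snd (vertex w k) \<le> snd (vertex w l)"
proof -
  have "take l w = take k w @ take (l - k) (drop k w)"
    using assms by (metis le_add_diff_inverse take_add)
  then show ?thesis by (simp add: vertex_def)
qed

lemma vertex_nonneg: "0 \<le> fst (vertex w k) \<and> 0 \<le> snd (vertex w k)"
  by (simp add: vertex_def)

lemma lv_Suc:
  assumes "k < length w"
  shows "lv m n w (Suc k) = (if w!k then lv m n w k + int m else lv m n w k - int n)"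
  using assms by (simp add: lv_def vertex_Suc algebra_simps)

lemma dyck_len: "dyck_path m n w \<Longrightarrow> length w = m + n"
  unfolding dyck_path_def using sum_length_filter_compl[of id w] by (simp add: comp_def)

lemma dyck_end: "dyck_path m n w \<Longrightarrow> vertex w (length w) = (int m, int n)"
  unfolding dyck_path_def vertex_def by simp

lemma dyck_lv_le: "dyck_path m n w \<Longrightarrow> j \<le> length w \<Longrightarrow> int n * fst (vertex w j) \<le> int m * snd (vertex w j)"
  unfolding dyck_path_def by blast

lemma dyck_lv_nonneg: "dyck_path m n w \<Longrightarrow> 0 \<le> lv m n w k"
proof -
  assume d: "dyck_path m n w"
  show ?thesis
  proof (cases "k \<le> length w")
    case True then show ?thesis using dyck_lv_le[OF d True] unfolding lv_def by linarith
  next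
    case False
    then have "vertex w k = vertex w (length w)" by (intro vertex_ge) simp
    then show ?thesis using dyck_lv_le[OF d, of "length w"] unfolding lv_def by simp
  qed
qed

lemma dyck_bounds:
  assumes "dyck_path m n w"
  shows "fst (vertex w k) \<le> int m \<and> snd (vertex w k) \<le> int n"
proof (cases "k \<le> length w")
  case True then show ?thesis using vertex_mono[OF True, of w] dyck_end[OF assms] by auto
next
  case False then show ?thesis using vertex_ge[of w k] dyck_end[OF assms] by auto
qed

lemma coprime_dvd_int:
  assumes "coprime m n" and "int m dvd int n * x"
  shows "int m dvd x"
proof -
  have "coprime (int m) (int n)" using assms(1) by simp
  then show ?thesis using assms(2) coprime_dvd_mult_right_iff by blast
qed

lemma lv_zero:
  assumes "dyck_path m n w" "coprime m n" "0 < m" "0 < n" "k \<le> length w" "lv m n w k = 0"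
  shows "k = 0 \<or> k = length w"
proof -
  obtain x y where xy: "vertex w k = (x,y)" by fastforce
  have 1: "int m * y = int n * x" using assms(6) xy by (simp add: lv_def)
  have "int m dvd int n * x" using 1 by (metis dvd_triv_left)
  then have "int m dvd x" using coprime_dvd_int assms(2) by blast
  moreover have "0 \<le> x" "x \<le> int m" using vertex_nonneg[of w k] dyck_bounds[OF assms(1), of k] xy by auto
  ultimately have "x = 0 \<or> x = int m"
  proof -
    obtain c where c: "x = int m * c" using \<open>int m dvd x\<close> by blast
    have "0 \<le> c" using c \<open>0 \<le> x\<close> assms(3) by (simp add: zero_le_mult_iff)
    moreover have "c \<le> 1" using c \<open>x \<le> int m\<close> assms(3) by (simp add: mult_le_cancel_left1)
    ultimately have "c = 0 \<or> c = 1" by linarith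
    then show ?thesis using c by auto
  qed
  then show ?thesis
  proof
    assume "x = 0" then have "y = 0" using 1 assms(3) by simp
    then show ?thesis using vertex_sum[of w k] xy \<open>x=0\<close> assms(5) by simp
  next
    assume "x = int m" then have "y = int n" using 1 assms(3) by (simp add: mult.commute)
    then show ?thesis using vertex_sum[of w k] xy \<open>x=int m\<close> assms(5) dyck_len[OF assms(1)] by simp
  qed
qed

definition lq :: "nat \<Rightarrow> nat \<Rightarrow> real \<times> real \<Rightarrow> real" where
  "lq m n q = real m * snd q - real n * fst q"

lemma diag_line_iff: "r \<in> diag_line m n q \<longleftrightarrow> lq m n r = lq m n q"
  unfolding diag_line_def lq_def by (auto simp: algebra_simps)

lemma lv_real: "real_of_int (lv m n w j) = real m * real_of_int (snd (vertex w j)) - real n * real_of_int (fst (vertex w j))"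
  by (simp add: lv_def)

lemma meets_iff:
  assumes "0 < m" "0 < n"
  shows "diag_line m n q \<inter> step_seg w j \<noteq> {} \<longleftrightarrow>
    (if w!j then real_of_int (lv m n w j) \<le> lq m n q \<and> lq m n q \<le> real_of_int (lv m n w j) + real m
     else real_of_int (lv m n w j) - real n \<le> lq m n q \<and> lq m n q \<le> real_of_int (lv m n w j))"
proof -
  define a where "a = real_of_int (fst (vertex w j))"
  define b where "b = real_of_int (snd (vertex w j))"
  have L: "real_of_int (lv m n w j) = real m * b - real n * a" by (simp add: lv_real a_def b_def)
  show ?thesis
  proof (cases "w!j")
    case True
    have seg: "step_seg w j = {(a, y) | y. b \<le> y \<and> y \<le> b + 1}"
      using True by (simp add: step_seg_def Let_def a_def b_def)
    have "diag_line m n q \<inter> step_seg w j \<noteq> {} \<longleftrightarrow> (\<exists>y. b \<le> y \<and> y \<le> b + 1 \<and> real m * y - real n * a = lq m n q)"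
    proof
      assume "diag_line m n q \<inter> step_seg w j \<noteq> {}"
      then obtain r where "r \<in> diag_line m n q" "r \<in> step_seg w j" by blast
      then show "\<exists>y. b \<le> y \<and> y \<le> b + 1 \<and> real m * y - real n * a = lq m n q"
        unfolding seg diag_line_iff by (auto simp: lq_def)
    next
      assume "\<exists>y. b \<le> y \<and> y \<le> b + 1 \<and> real m * y - real n * a = lq m n q"
      then obtain y where "b \<le> y" "y \<le> b + 1" "real m * y - real n * a = lq m n q" by blast
      then have "(a,y) \<in> diag_line m n q" "(a,y) \<in> step_seg w j" unfolding seg diag_line_iff by (auto simp: lq_def)
      then show "diag_line m n q \<inter> step_seg w j \<noteq> {}" by blast
    qed
    also have "\<dots> \<longleftrightarrow> real m * b - real n * a \<le> lq m n q \<and> lq m n q \<le> real m * b - real n * a + real m"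
    proof
      assume "\<exists>y. b \<le> y \<and> y \<le> b + 1 \<and> real m * y - real n * a = lq m n q"
      then obtain y where y: "b \<le> y" "y \<le> b + 1" "real m * y - real n * a = lq m n q" by blast
      have "real m * b \<le> real m * y" using y(1) by (simp add: mult_left_mono)
      moreover have "real m * y \<le> real m * b + real m" using y(2) mult_left_mono[of y "b+1" "real m"] by (simp add: algebra_simps)
      ultimately show "real m * b - real n * a \<le> lq m n q \<and> lq m n q \<le> real m * b - real n * a + real m"
        using y(3) by linarith
    next
      assume h: "real m * b - real n * a \<le> lq m n q \<and> lq m n q \<le> real m * b - real n * a + real m"
      define y where "y = (lq m n q + real n * a) / real m"
      have my: "real m * y = lq m n q + real n * a" using assms(1) by (simp add: y_def)
      have "real m * b \<le> real m * y" "real m * y \<le> real m * (b + 1)" using h my by (auto simp: algebra_simps)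
      then have "b \<le> y" "y \<le> b + 1" using assms(1) by (simp_all add: mult_le_cancel_left_pos)
      then show "\<exists>y. b \<le> y \<and> y \<le> b + 1 \<and> real m * y - real n * a = lq m n q" using my by (intro exI[of _ y]) auto
    qed
    finally show ?thesis using True L by simp
  next
    case False
    have seg: "step_seg w j = {(x, b) | x. a \<le> x \<and> x \<le> a + 1}"
      using False by (simp add: step_seg_def Let_def a_def b_def)
    have "diag_line m n q \<inter> step_seg w j \<noteq> {} \<longleftrightarrow> (\<exists>x. a \<le> x \<and> x \<le> a + 1 \<and> real m * b - real n * x = lq m n q)"
    proof
      assume "diag_line m n q \<inter> step_seg w j \<noteq> {}"
      then obtain r where "r \<in> diag_line m n q" "r \<in> step_seg w j" by blast
      then show "\<exists>x. a \<le> x \<and> x \<le> a + 1 \<and> real m * b - real n * x = lq m n q"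
        unfolding seg diag_line_iff by (auto simp: lq_def)
    next
      assume "\<exists>x. a \<le> x \<and> x \<le> a + 1 \<and> real m * b - real n * x = lq m n q"
      then obtain x where "a \<le> x" "x \<le> a + 1" "real m * b - real n * x = lq m n q" by blast
      then have "(x,b) \<in> diag_line m n q" "(x,b) \<in> step_seg w j" unfolding seg diag_line_iff by (auto simp: lq_def)
      then show "diag_line m n q \<inter> step_seg w j \<noteq> {}" by blast
    qed
    also have "\<dots> \<longleftrightarrow> real m * b - real n * a - real n \<le> lq m n q \<and> lq m n q \<le> real m * b - real n * a"
    proof
      assume "\<exists>x. a \<le> x \<and> x \<le> a + 1 \<and> real m * b - real n * x = lq m n q"
      then obtain x where x: "a \<le> x" "x \<le> a + 1" "real m * b - real n * x = lq m n q" by blast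
      have "real n * a \<le> real n * x" using x(1) by (simp add: mult_left_mono)
      moreover have "real n * x \<le> real n * a + real n" using x(2) mult_left_mono[of x "a+1" "real n"] by (simp add: algebra_simps)
      ultimately show "real m * b - real n * a - real n \<le> lq m n q \<and> lq m n q \<le> real m * b - real n * a"
        using x(3) by linarith
    next
      assume h: "real m * b - real n * a - real n \<le> lq m n q \<and> lq m n q \<le> real m * b - real n * a"
      define x where "x = (real m * b - lq m n q) / real n"
      have nx: "real n * x = real m * b - lq m n q" using assms(2) by (simp add: x_def)
      have "real n * a \<le> real n * x" "real n * x \<le> real n * (a + 1)" using h nx by (auto simp: algebra_simps)
      then have "a \<le> x" "x \<le> a + 1" using assms(2) by (simp_all add: mult_le_cancel_left_pos)
      then show "\<exists>x. a \<le> x \<and> x \<le> a + 1 \<and> real m * b - real n * x = lq m n q" using nx by (intro exI[of _ x]) auto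
    qed
    finally show ?thesis using False L by simp
  qed
qed

lemma exists_lq: "0 < m \<Longrightarrow> \<exists>q. lq m n q = c"
  by (rule exI[of _ "(0, c / real m)"]) (simp add: lq_def)

lemma hv_order:
  assumes "i < length w" "j < length w" "\<not> w!i" "w!j"
  shows "fst (vertex w i) + 1 \<le> fst (vertex w j) \<longleftrightarrow> i < j"
proof
  assume "i < j"
  then have "fst (vertex w (Suc i)) \<le> fst (vertex w j)" using vertex_mono[of "Suc i" j w] by simp
  then show "fst (vertex w i) + 1 \<le> fst (vertex w j)" using vertex_Suc[OF assms(1)] assms(3) by simp
next
  assume h: "fst (vertex w i) + 1 \<le> fst (vertex w j)"
  show "i < j"
  proof (rule ccontr)
    assume "\<not> i < j"
    then have "j \<le> i" by simp
    then have "fst (vertex w j) \<le> fst (vertex w i)" using vertex_mono by blast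
    then show False using h by simp
  qed
qed

lemma h_plus_eq:
  assumes "0 < m" "0 < n"
  shows "h_plus m n w = card {(i,j). i \<in> hsteps w \<and> j \<in> vsteps w \<and> i < j \<and>
            lv m n w (Suc i) \<le> lv m n w j + int m \<and> lv m n w j \<le> lv m n w i}"
proof -
  have "{(j1, j2). j1 \<in> hsteps w \<and> j2 \<in> vsteps w \<and>
      fst (vertex w j1) + 1 \<le> fst (vertex w j2) \<and>
      (\<exists>q. diag_line m n q \<inter> step_seg w j1 \<noteq> {} \<and> diag_line m n q \<inter> step_seg w j2 \<noteq> {})}
     = {(i,j). i \<in> hsteps w \<and> j \<in> vsteps w \<and> i < j \<and>
            lv m n w (Suc i) \<le> lv m n w j + int m \<and> lv m n w j \<le> lv m n w i}"
  proof -
  have key: "(fst (vertex w i) + 1 \<le> fst (vertex w j) \<and>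
          (\<exists>q. diag_line m n q \<inter> step_seg w i \<noteq> {} \<and> diag_line m n q \<inter> step_seg w j \<noteq> {}))
       \<longleftrightarrow> (i < j \<and> lv m n w (Suc i) \<le> lv m n w j + int m \<and> lv m n w j \<le> lv m n w i)"
    if i: "i \<in> hsteps w" and j: "j \<in> vsteps w" for i j
  proof -
    have il: "i < length w" "\<not> w!i" using i by (auto simp: hsteps_def)
    have jl: "j < length w" "w!j" using j by (auto simp: vsteps_def)
    have ls: "lv m n w (Suc i) = lv m n w i - int n" using lv_Suc[OF il(1)] il(2) by simp
    have ord: "fst (vertex w i) + 1 \<le> fst (vertex w j) \<longleftrightarrow> i < j" by (rule hv_order[OF il(1) jl(1) il(2) jl(2)])
    show ?thesis
    proof
      assume "fst (vertex w i) + 1 \<le> fst (vertex w j) \<and>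
          (\<exists>q. diag_line m n q \<inter> step_seg w i \<noteq> {} \<and> diag_line m n q \<inter> step_seg w j \<noteq> {})"
      then obtain q where o: "fst (vertex w i) + 1 \<le> fst (vertex w j)" and q1: "diag_line m n q \<inter> step_seg w i \<noteq> {}" and q2: "diag_line m n q \<inter> step_seg w j \<noteq> {}" by blast
      have a: "real_of_int (lv m n w i) - real n \<le> lq m n q \<and> lq m n q \<le> real_of_int (lv m n w i)"
        using q1 meets_iff[OF assms, of q w i] il(2) by simp
      have b: "real_of_int (lv m n w j) \<le> lq m n q \<and> lq m n q \<le> real_of_int (lv m n w j) + real m"
        using q2 meets_iff[OF assms, of q w j] jl(2) by simp
      have "real_of_int (lv m n w i) - real n \<le> real_of_int (lv m n w j) + real m"
           "real_of_int (lv m n w j) \<le> real_of_int (lv m n w i)" using a b by linarith+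
      then have "lv m n w (Suc i) \<le> lv m n w j + int m" "lv m n w j \<le> lv m n w i" unfolding ls by linarith+
      then show "i < j \<and> lv m n w (Suc i) \<le> lv m n w j + int m \<and> lv m n w j \<le> lv m n w i"
        using ord o by simp
    next
      assume h: "i < j \<and> lv m n w (Suc i) \<le> lv m n w j + int m \<and> lv m n w j \<le> lv m n w i"
      define c where "c = real_of_int (max (lv m n w (Suc i)) (lv m n w j))"
      obtain q where q: "lq m n q = c" using exists_lq[OF assms(1)] by blast
      have "real_of_int (lv m n w i) - real n \<le> lq m n q \<and> lq m n q \<le> real_of_int (lv m n w i)"
        using q ls h unfolding c_def by (simp add: max_def)
      then have q1: "diag_line m n q \<inter> step_seg w i \<noteq> {}" using meets_iff[OF assms, of q w i] il(2) by simp
      have "real_of_int (lv m n w j) \<le> lq m n q \<and> lq m n q \<le> real_of_int (lv m n w j) + real m"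
        using q h unfolding c_def by (simp add: max_def)
      then have q2: "diag_line m n q \<inter> step_seg w j \<noteq> {}" using meets_iff[OF assms, of q w j] jl(2) by simp
      show "fst (vertex w i) + 1 \<le> fst (vertex w j) \<and>
          (\<exists>q. diag_line m n q \<inter> step_seg w i \<noteq> {} \<and> diag_line m n q \<inter> step_seg w j \<noteq> {})"
        using ord h q1 q2 by blast
    qed
  qed
  have E: "(i \<in> hsteps w \<and> j \<in> vsteps w \<and> fst (vertex w i) + 1 \<le> fst (vertex w j) \<and>
          (\<exists>q. diag_line m n q \<inter> step_seg w i \<noteq> {} \<and> diag_line m n q \<inter> step_seg w j \<noteq> {}))
       \<longleftrightarrow> (i \<in> hsteps w \<and> j \<in> vsteps w \<and> i < j \<and> lv m n w (Suc i) \<le> lv m n w j + int m \<and> lv m n w j \<le> lv m n w i)" for i j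
    using key[of i j] by blast
  show ?thesis
    unfolding h_plus_def by (simp only: E)
  qed
  then show ?thesis unfolding h_plus_def by simp
qed

lemma dvd_small:
  assumes "int m dvd d" "- int m < d" "d \<le> int m" "0 < m"
  shows "d = 0 \<or> d = int m"
proof -
  obtain c where c: "d = int m * c" using assms(1) by blast
  have "int m * (-1) < int m * c" using assms(2) c by simp
  then have "-1 < c" using assms(4) by (simp only: mult_less_cancel_left_pos of_nat_0_less_iff)
  moreover have "c \<le> 1" using assms(3,4) c by (simp add: mult_le_cancel_left1)
  ultimately have "c = 0 \<or> c = 1" by linarith
  then show ?thesis using c by auto
qed

definition lvp :: "nat \<Rightarrow> nat \<Rightarrow> int \<times> int \<Rightarrow> int" where
  "lvp m n p = int m * snd p - int n * fst p"

lemma lv_lvp: "lv m n w k = lvp m n (vertex w k)"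
  by (simp add: lv_def lvp_def)

lemma interior_props:
  assumes "dyck_path m n w" "p \<in> interior_pts m n w"
  obtains i where "i \<in> hsteps w" "fst (vertex w (Suc i)) = fst p" "snd p < snd (vertex w i)"
    "1 \<le> fst p" "fst p \<le> int m" "snd p < int n" "0 < lvp m n p"
proof -
  obtain i where i: "i \<in> hsteps w" "fst (vertex w (Suc i)) = fst p" "snd p < snd (vertex w i)"
    and lt: "int n * fst p < int m * snd p"
    using assms(2) unfolding interior_pts_def by blast
  have il: "i < length w" "\<not> w!i" using i(1) by (auto simp: hsteps_def)
  have "fst (vertex w (Suc i)) = fst (vertex w i) + 1" using vertex_Suc[OF il(1)] il(2) by simp
  then have "1 \<le> fst p" using i(2) vertex_nonneg[of w i] by simp
  moreover have "fst p \<le> int m" using i(2) dyck_bounds[OF assms(1), of "Suc i"] by simp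
  moreover have "snd p < int n" using i(3) dyck_bounds[OF assms(1), of i] by simp
  moreover have "0 < lvp m n p" using lt by (simp add: lvp_def)
  ultimately show ?thesis using that i by blast
qed

lemma finite_interior:
  assumes "dyck_path m n w"
  shows "finite (interior_pts m n w)"
proof -
  have "interior_pts m n w \<subseteq> {1..int m} \<times> {0..int n}"
  proof
    fix p assume p: "p \<in> interior_pts m n w"
    then obtain i where "1 \<le> fst p" "fst p \<le> int m" "snd p < int n" "0 < lvp m n p"
      using interior_props[OF assms p] by metis
    moreover have "0 \<le> snd p"
    proof (rule ccontr)
      assume "\<not> 0 \<le> snd p"
      then have "int m * snd p \<le> 0" by (simp add: mult_nonneg_nonpos)
      moreover have "0 \<le> int n * fst p" using \<open>1 \<le> fst p\<close> by simp
      ultimately show False using \<open>0 < lvp m n p\<close> by (simp add: lvp_def)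
    qed
    ultimately show "p \<in> {1..int m} \<times> {0..int n}" by (cases p) auto
  qed
  then show ?thesis by (rule finite_subset) simp
qed

lemma interior_vertex_eq:
  assumes "dyck_path m n w" "coprime m n" "0 < m" "0 < n" "p \<in> interior_pts m n w"
    "lvp m n p = lv m n w k"
  shows "p = vertex w k"
proof -
  obtain i where ip: "1 \<le> fst p" "fst p \<le> int m" "snd p < int n" "0 < lvp m n p"
    using interior_props[OF assms(1,5)] by metis
  obtain x y where xy: "vertex w k = (x,y)" by fastforce
  have b: "0 \<le> x" "x \<le> int m" "y \<le> int n" "0 \<le> y"
    using vertex_nonneg[of w k] dyck_bounds[OF assms(1), of k] xy by auto
  have eq: "int m * (snd p - y) = int n * (fst p - x)"
    using assms(6) xy by (simp add: lvp_def lv_def algebra_simps)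
  then have "int m dvd int n * (fst p - x)" by (metis dvd_triv_left)
  then have "int m dvd (fst p - x)" using coprime_dvd_int assms(2) by blast
  then have "fst p - x = 0 \<or> fst p - x = int m" using dvd_small[of m "fst p - x"] ip b assms(3) by linarith
  then show ?thesis
  proof
    assume "fst p - x = 0" then have "snd p = y" using eq assms(3) by simp
    then show ?thesis using \<open>fst p - x = 0\<close> xy by (cases p) auto
  next
    assume "fst p - x = int m" then have "snd p - y = int n" using eq assms(3) by (simp add: mult.commute)
    then show ?thesis using ip b by linarith
  qed
qed

lemma rpt_in_vseg:
  assumes "w!j"
  shows "rpt p \<in> step_seg w j \<longleftrightarrow> fst p = fst (vertex w j) \<and> snd (vertex w j) \<le> snd p \<and> snd p \<le> snd (vertex w j) + 1"
proof -
  have "rpt p \<in> step_seg w j \<longleftrightarrow> real_of_int (fst p) = real_of_int (fst (vertex w j)) \<and>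
     real_of_int (snd (vertex w j)) \<le> real_of_int (snd p) \<and> real_of_int (snd p) \<le> real_of_int (snd (vertex w j)) + 1"
    using assms by (auto simp: step_seg_def Let_def rpt_def)
  also have "\<dots> \<longleftrightarrow> fst p = fst (vertex w j) \<and> snd (vertex w j) \<le> snd p \<and> snd p \<le> snd (vertex w j) + 1"
    by linarith
  finally show ?thesis .
qed

lemma kval_eq:
  assumes "dyck_path m n w" "coprime m n" "0 < m" "0 < n" "p \<in> interior_pts m n w"
  shows "kval m n w p = card {j \<in> vsteps w. lv m n w j < lvp m n p \<and> lvp m n p < lv m n w j + int m}"
proof -
  have lqp: "lq m n (rpt p) = real_of_int (lvp m n p)" by (simp add: lq_def rpt_def lvp_def)
  have "j \<in> vsteps w \<Longrightarrow> (rpt p \<notin> step_seg w j \<and> diag_line m n (rpt p) \<inter> step_seg w j \<noteq> {}) \<longleftrightarrow>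
        (lv m n w j < lvp m n p \<and> lvp m n p < lv m n w j + int m)" for j
  proof -
    assume j: "j \<in> vsteps w"
    have jl: "j < length w" "w!j" using j by (auto simp: vsteps_def)
    have vs: "vertex w (Suc j) = (fst (vertex w j), snd (vertex w j) + 1)" using vertex_Suc[OF jl(1)] jl(2) by simp
    have ls: "lv m n w (Suc j) = lv m n w j + int m" using lv_Suc[OF jl(1)] jl(2) by simp
    have meet: "diag_line m n (rpt p) \<inter> step_seg w j \<noteq> {} \<longleftrightarrow> lv m n w j \<le> lvp m n p \<and> lvp m n p \<le> lv m n w j + int m"
    proof -
      have e: "real_of_int (lv m n w j) + real m = real_of_int (lv m n w j + int m)" by simp
      have r: "(real_of_int (lvp m n p) \<le> real_of_int (lv m n w j) + real m) = (lvp m n p \<le> lv m n w j + int m)"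
        unfolding e by (simp only: of_int_le_iff)
      show ?thesis using meets_iff[OF assms(3,4), of "rpt p" w j] jl(2) lqp r by simp
    qed
    show ?thesis
    proof
      assume h: "rpt p \<notin> step_seg w j \<and> diag_line m n (rpt p) \<inter> step_seg w j \<noteq> {}"
      have ne1: "lvp m n p \<noteq> lv m n w j"
      proof
        assume "lvp m n p = lv m n w j"
        then have "p = vertex w j" using interior_vertex_eq[OF assms] by blast
        then have "rpt p \<in> step_seg w j" using rpt_in_vseg[OF jl(2)] by simp
        then show False using h by blast
      qed
      have ne2: "lvp m n p \<noteq> lv m n w j + int m"
      proof
        assume "lvp m n p = lv m n w j + int m"
        then have "p = vertex w (Suc j)" using interior_vertex_eq[OF assms] ls by simp
        then have "rpt p \<in> step_seg w j" using rpt_in_vseg[OF jl(2)] vs by simp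
        then show False using h by blast
      qed
      show "lv m n w j < lvp m n p \<and> lvp m n p < lv m n w j + int m" using h meet ne1 ne2 by auto
    next
      assume h: "lv m n w j < lvp m n p \<and> lvp m n p < lv m n w j + int m"
      have "rpt p \<notin> step_seg w j"
      proof
        assume "rpt p \<in> step_seg w j"
        then have on: "fst p = fst (vertex w j) \<and> snd (vertex w j) \<le> snd p \<and> snd p \<le> snd (vertex w j) + 1"
          using rpt_in_vseg[OF jl(2)] by simp
        then have "snd p = snd (vertex w j) \<or> snd p = snd (vertex w j) + 1" by linarith
        then have "lvp m n p = lv m n w j \<or> lvp m n p = lv m n w j + int m"
          using on by (auto simp: lvp_def lv_def algebra_simps)
        then show False using h by auto
      qed
      then show "rpt p \<notin> step_seg w j \<and> diag_line m n (rpt p) \<inter> step_seg w j \<noteq> {}" using h meet by auto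
    qed
  qed
  then show ?thesis unfolding kval_def by (metis (no_types, lifting) mem_Collect_eq)
qed

lemma hcol_inj:
  assumes "i \<in> hsteps w" "i' \<in> hsteps w" "fst (vertex w (Suc i)) = fst (vertex w (Suc i'))"
  shows "i = i'"
proof (rule ccontr)
  have il: "i < length w" "\<not> w!i" "i' < length w" "\<not> w!i'" using assms(1,2) by (auto simp: hsteps_def)
  have s1: "fst (vertex w (Suc i)) = fst (vertex w i) + 1" using vertex_Suc[OF il(1)] il(2) by simp
  have s2: "fst (vertex w (Suc i')) = fst (vertex w i') + 1" using vertex_Suc[OF il(3)] il(4) by simp
  assume "i \<noteq> i'"
  then consider "Suc i \<le> i'" | "Suc i' \<le> i" by linarith
  then show False
  proof cases
    case 1 then have "fst (vertex w (Suc i)) \<le> fst (vertex w i')" using vertex_mono by blast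
    then show False using assms(3) s2 by simp
  next
    case 2 then have "fst (vertex w (Suc i')) \<le> fst (vertex w i)" using vertex_mono by blast
    then show False using assms(3) s1 by simp
  qed
qed

lemma noncong:
  assumes "dyck_path m n w" "coprime m n" "0 < m" "0 < n" "i \<in> hsteps w" "j \<in> vsteps w"
    "lv m n w j + int m < lv m n w (Suc i)"
  shows "\<not> int m dvd (lv m n w (Suc i) - lv m n w j)"
proof
  assume d: "int m dvd (lv m n w (Suc i) - lv m n w j)"
  have il: "i < length w" "\<not> w!i" using assms(5) by (auto simp: hsteps_def)
  have jl: "j < length w" "w!j" using assms(6) by (auto simp: vsteps_def)
  obtain xe ye where e: "vertex w (Suc i) = (xe, ye)" by fastforce
  obtain xv yv where v: "vertex w j = (xv, yv)" by fastforce
  have si: "vertex w (Suc i) = (fst (vertex w i) + 1, snd (vertex w i))" using vertex_Suc[OF il(1)] il(2) by simp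
  have "lv m n w (Suc i) - lv m n w j = int m * (ye - yv) - int n * (xe - xv)"
    using e v by (simp add: lv_def algebra_simps)
  then have eq2: "int n * (xe - xv) = int m * (ye - yv) - (lv m n w (Suc i) - lv m n w j)" by simp
  have "int m dvd int n * (xe - xv)" unfolding eq2 by (rule dvd_diff) (simp_all add: d)
  then have dd: "int m dvd (xe - xv)" using coprime_dvd_int assms(2) by blast
  have b: "1 \<le> xe" "xe \<le> int m" "0 \<le> xv" "xv \<le> int m" "ye \<le> int n"
    using e v si vertex_nonneg[of w i] vertex_nonneg[of w j] dyck_bounds[OF assms(1), of "Suc i"] dyck_bounds[OF assms(1), of j]
    by auto
  have "xe - xv = 0 \<or> xe - xv = int m" using dvd_small[OF dd] b assms(3) by linarith
  then show False
  proof
    assume x0: "xe - xv = 0"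
    have "lv m n w j < lv m n w (Suc i)" using assms(7) by simp
    then have "yv < ye" using e v x0 assms(3) by (simp add: lv_def)
    show False
    proof (cases "j \<le> i")
      case True
      then have "fst (vertex w j) \<le> fst (vertex w i)" using vertex_mono by blast
      then show False using si e v x0 by simp
    next
      case False
      then have "snd (vertex w (Suc i)) \<le> snd (vertex w j)" using vertex_mono[of "Suc i" j w] by simp
      then show False using e v \<open>yv < ye\<close> by simp
    qed
  next
    assume "xe - xv = int m"
    then have "xe = int m" using b by linarith
    then have "lv m n w (Suc i) \<le> 0" using e b by (simp add: lv_def mult_left_mono mult.commute)
    moreover have "0 \<le> lv m n w j" using dyck_lv_nonneg[OF assms(1)] .
    ultimately show False using assms(7) by linarith
  qed
qed

lemma finite_hsteps: "finite (hsteps w)" by (simp add: hsteps_def)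
lemma finite_vsteps: "finite (vsteps w)" by (simp add: vsteps_def)

lemma per_j:
  assumes "dyck_path m n w" "coprime m n" "0 < m" "0 < n" "j \<in> vsteps w"
  shows "card {p \<in> interior_pts m n w. lv m n w j < lvp m n p \<and> lvp m n p < lv m n w j + int m}
       = card {i \<in> hsteps w. lv m n w j + int m < lv m n w (Suc i)}"
    (is "card ?A = card ?B")
proof (rule antisym)
  have fA: "finite ?A" using finite_interior[OF assms(1)] by simp
  have fB: "finite ?B" using finite_hsteps by simp
  define f where "f p = (SOME i. i \<in> hsteps w \<and> fst (vertex w (Suc i)) = fst p \<and> snd p < snd (vertex w i))" for p
  have fp: "f p \<in> hsteps w \<and> fst (vertex w (Suc (f p))) = fst p \<and> snd p < snd (vertex w (f p))"
    if pI: "p \<in> interior_pts m n w" for p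
  proof -
    obtain i where "i \<in> hsteps w" "fst (vertex w (Suc i)) = fst p" "snd p < snd (vertex w i)"
      using interior_props[OF assms(1) pI] by metis
    then show ?thesis unfolding f_def by (rule someI[where P="\<lambda>i. i \<in> hsteps w \<and> fst (vertex w (Suc i)) = fst p \<and> snd p < snd (vertex w i)", OF conjI[OF _ conjI]])
  qed
  have "inj_on f ?A"
  proof (rule inj_onI)
    fix p p' assume p: "p \<in> ?A" and p': "p' \<in> ?A" and eq: "f p = f p'"
    have "fst p = fst p'" using fp[of p] fp[of p'] p p' eq by auto
    moreover have "snd p = snd p'"
    proof -
      have "int m * (snd p - snd p') = lvp m n p - lvp m n p'" using \<open>fst p = fst p'\<close> by (simp add: lvp_def algebra_simps)
      moreover have "- int m < lvp m n p - lvp m n p'" "lvp m n p - lvp m n p' < int m" using p p' by auto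
      ultimately have "int m * (snd p - snd p') < int m * 1" "int m * (-1) < int m * (snd p - snd p')" by auto
      then have "snd p - snd p' < 1" "-1 < snd p - snd p'" using assms(3) by (simp_all only: mult_less_cancel_left_pos of_nat_0_less_iff)
      then show ?thesis by linarith
    qed
    ultimately show "p = p'" by (simp add: prod_eq_iff)
  qed
  moreover have "f ` ?A \<subseteq> ?B"
  proof
    fix i assume "i \<in> f ` ?A"
    then obtain p where p: "p \<in> ?A" and i: "i = f p" by blast
    have h: "i \<in> hsteps w" "fst (vertex w (Suc i)) = fst p" "snd p < snd (vertex w i)" using fp[of p] p i by auto
    have il: "i < length w" "\<not> w!i" using h(1) by (auto simp: hsteps_def)
    have si: "snd (vertex w (Suc i)) = snd (vertex w i)" using vertex_Suc[OF il(1)] il(2) by simp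
    have "lv m n w (Suc i) - lvp m n p = int m * (snd (vertex w i) - snd p)"
      using h(2) si by (simp add: lv_def lvp_def algebra_simps)
    moreover have "int m * 1 \<le> int m * (snd (vertex w i) - snd p)" using h(3) by (intro mult_left_mono) auto
    ultimately have "lvp m n p + int m \<le> lv m n w (Suc i)" by simp
    then show "i \<in> ?B" using h(1) p by auto
  qed
  ultimately show "card ?A \<le> card ?B" using card_inj_on_le fB by blast
next
  have fA: "finite ?A" using finite_interior[OF assms(1)] by simp
  define v where "v = lv m n w j"
  define g where "g i = (fst (vertex w (Suc i)), snd (vertex w (Suc i)) - (lv m n w (Suc i) - v - 1) div int m)" for i
  have "inj_on g ?B"
  proof (rule inj_onI)
    fix i i' assume "i \<in> ?B" "i' \<in> ?B" "g i = g i'"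
    then show "i = i'" using hcol_inj[of i w i'] by (auto simp: g_def)
  qed
  moreover have "g ` ?B \<subseteq> ?A"
  proof
    fix p assume "p \<in> g ` ?B"
    then obtain i where i: "i \<in> ?B" and p: "p = g i" by blast
    have ih: "i \<in> hsteps w" and ilt: "v + int m < lv m n w (Suc i)" using i by (auto simp: v_def)
    have il: "i < length w" "\<not> w!i" using ih by (auto simp: hsteps_def)
    have si: "snd (vertex w (Suc i)) = snd (vertex w i)" using vertex_Suc[OF il(1)] il(2) by simp
    define e where "e = lv m n w (Suc i)"
    define t where "t = (e - v - 1) div int m"
    define r where "r = (e - v - 1) mod int m"
    have tr: "e - v - 1 = int m * t + r" unfolding t_def r_def by simp
    have r0: "0 \<le> r" "r < int m" unfolding r_def using assms(3) by simp_all
    have nc: "\<not> int m dvd (e - v)" using noncong[OF assms(1-4) ih assms(5)] ilt unfolding e_def v_def by simp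
    have "r \<noteq> int m - 1"
    proof
      assume "r = int m - 1"
      then have "e - v = int m * (t + 1)" using tr by (simp add: algebra_simps)
      then show False using nc by simp
    qed
    then have r1: "r < int m - 1" using r0 by linarith
    have lp: "lvp m n p = e - int m * t"
      unfolding p g_def e_def t_def by (simp add: lvp_def lv_def algebra_simps)
    have lp2: "lvp m n p = v + 1 + r" using lp tr by simp
    have "0 < int m * t" using tr r0 ilt unfolding e_def by linarith
    then have t1: "1 \<le> t" using assms(3) by (simp add: zero_less_mult_iff)
    have v0: "0 \<le> v" unfolding v_def using dyck_lv_nonneg[OF assms(1)] .
    have "p \<in> interior_pts m n w"
      unfolding interior_pts_def
    proof (intro CollectI conjI bexI[of _ i])
      show "int n * fst p < int m * snd p" using lp2 r0 v0 by (simp add: lvp_def)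
      show "fst (vertex w (Suc i)) = fst p" by (simp add: p g_def)
      show "snd p < snd (vertex w i)" using t1 si unfolding p g_def t_def e_def by simp
      show "i \<in> hsteps w" by (rule ih)
    qed
    then show "p \<in> ?A" using lp2 r0 r1 unfolding v_def by auto
  qed
  ultimately show "card ?B \<le> card ?A" using card_inj_on_le fA by blast
qed

lemma card_filter_sum: "finite A \<Longrightarrow> card {x \<in> A. P x} = (\<Sum>x\<in>A. if P x then 1 else 0)"
  by (simp add: sum.inter_filter[symmetric])

lemma sum_kval:
  assumes "dyck_path m n w" "coprime m n" "0 < m" "0 < n"
  shows "(\<Sum>p\<in>interior_pts m n w. kval m n w p)
       = card {(i,j). i \<in> hsteps w \<and> j \<in> vsteps w \<and> lv m n w j + int m < lv m n w (Suc i)}"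
proof -
  let ?I = "interior_pts m n w"
  let ?P = "\<lambda>p j. lv m n w j < lvp m n p \<and> lvp m n p < lv m n w j + int m"
  let ?Q = "\<lambda>i j. lv m n w j + int m < lv m n w (Suc i)"
  have fI: "finite ?I" using finite_interior[OF assms(1)] .
  have "(\<Sum>p\<in>?I. kval m n w p) = (\<Sum>p\<in>?I. card {j \<in> vsteps w. ?P p j})"
    using kval_eq[OF assms] by simp
  also have "\<dots> = (\<Sum>p\<in>?I. \<Sum>j\<in>vsteps w. if ?P p j then 1 else 0)"
    using card_filter_sum[OF finite_vsteps] by simp
  also have "\<dots> = (\<Sum>j\<in>vsteps w. \<Sum>p\<in>?I. if ?P p j then 1 else 0)" by (rule sum.swap)
  also have "\<dots> = (\<Sum>j\<in>vsteps w. card {p \<in> ?I. ?P p j})"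
    using card_filter_sum[OF fI] by simp
  also have "\<dots> = (\<Sum>j\<in>vsteps w. card {i \<in> hsteps w. ?Q i j})"
    using per_j[OF assms] by simp
  also have "\<dots> = (\<Sum>j\<in>vsteps w. \<Sum>i\<in>hsteps w. if ?Q i j then 1 else 0)"
    using card_filter_sum[OF finite_hsteps] by simp
  also have "\<dots> = (\<Sum>i\<in>hsteps w. \<Sum>j\<in>vsteps w. if ?Q i j then 1 else 0)" by (rule sum.swap)
  also have "\<dots> = (\<Sum>i\<in>hsteps w. card {j \<in> vsteps w. ?Q i j})"
    using card_filter_sum[OF finite_vsteps] by simp
  also have "\<dots> = card (Sigma (hsteps w) (\<lambda>i. {j \<in> vsteps w. ?Q i j}))"
    by (rule card_SigmaI[symmetric]) (auto simp: finite_hsteps finite_vsteps)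
  also have "Sigma (hsteps w) (\<lambda>i. {j \<in> vsteps w. ?Q i j}) = {(i,j). i \<in> hsteps w \<and> j \<in> vsteps w \<and> ?Q i j}"
    by auto
  finally show ?thesis .
qed

definition tau :: "(nat \<Rightarrow> bool) \<Rightarrow> (nat \<Rightarrow> int) \<Rightarrow> nat \<Rightarrow> nat \<Rightarrow> int" where
  "tau s a i j = (if \<not> s i \<and> s j \<and> ((i < j \<and> a j \<le> a i) \<or> (j < i \<and> a (Suc j) < a (Suc i))) then 1 else 0)"

definition cov :: "(nat \<Rightarrow> int) \<Rightarrow> int \<Rightarrow> nat \<Rightarrow> int" where
  "cov a t k = (if t < a (Suc k) then 1 else 0) - (if t < a k then 1 else 0)"

lemma cov_tele: "s0 \<le> e \<Longrightarrow> (\<Sum>k = s0..<e. cov a t k) = (if t < a e then 1 else 0) - (if t < a s0 then 1 else 0)"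
  unfolding cov_def using sum_Suc_diff'[of s0 e "\<lambda>k. (if t < a k then 1 else 0) :: int"] by simp

lemma sum_split4:
  assumes "Suc (Suc p) \<le> N"
  shows "(\<Sum>k<N. f k) = (\<Sum>k<p. f k) + f p + f (Suc p) + (\<Sum>k = Suc (Suc p)..<N. f k)"
proof -
  have "{..<N} = {..<p} \<union> {p, Suc p} \<union> {Suc (Suc p)..<N}" using assms by auto
  moreover have "(\<Sum>k \<in> {..<p} \<union> {p, Suc p} \<union> {Suc (Suc p)..<N}. f k)
     = (\<Sum>k \<in> {..<p} \<union> {p, Suc p}. f k) + (\<Sum>k = Suc (Suc p)..<N. f k)"
    by (rule sum.union_disjoint) auto
  moreover have "(\<Sum>k \<in> {..<p} \<union> {p, Suc p}. f k) = (\<Sum>k<p. f k) + (\<Sum>k\<in>{p, Suc p}. f k)"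
    by (rule sum.union_disjoint) auto
  ultimately show ?thesis by (simp add: add_ac)
qed

lemma swap_T:
  fixes s s' :: "nat \<Rightarrow> bool" and a a' :: "nat \<Rightarrow> int" and mm nn :: int
  assumes pN: "Suc (Suc p) \<le> N"
    and sp: "\<not> s p" "s (Suc p)" "s' p" "\<not> s' (Suc p)"
    and ss: "\<And>k. k \<noteq> p \<Longrightarrow> k \<noteq> Suc p \<Longrightarrow> s' k = s k"
    and aa: "\<And>k. k \<noteq> Suc p \<Longrightarrow> a' k = a k"
    and astep: "\<And>k. k < N \<Longrightarrow> a (Suc k) = (if s k then a k + mm else a k - nn)"
    and ap: "a' (Suc p) = a p + mm"
    and a0: "a 0 = 0" and L1: "1 \<le> a p - nn" and aN: "a N \<le> a p + mm"
    and mpos: "0 < mm" and npos: "0 < nn"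
  shows "(\<Sum>i<N. \<Sum>j<N. tau s a i j) = (\<Sum>i<N. \<Sum>j<N. tau s' a' i j)"
proof -
  define D where "D i j = tau s a i j - tau s' a' i j" for i j
  have a1: "a (Suc p) = a p - nn" using astep[of p] pN sp by simp
  have a2: "a (Suc (Suc p)) = a p - nn + mm" using astep[of "Suc p"] pN sp a1 by simp
  have Dz: "D i j = 0" if "i \<noteq> p" "i \<noteq> Suc p" "j \<noteq> p" "j \<noteq> Suc p" for i j
  proof -
    have "Suc i \<noteq> Suc p" "Suc j \<noteq> Suc p" using that by auto
    then show ?thesis using that unfolding D_def tau_def by (simp add: ss aa)
  qed
  have row: "(\<Sum>j<N. D i j) = D i p + D i (Suc p)" if "i \<noteq> p" "i \<noteq> Suc p" for i
  proof -
    have "(\<Sum>j<p. D i j) = 0" using Dz that by (intro sum.neutral) auto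
    moreover have "(\<Sum>j = Suc (Suc p)..<N. D i j) = 0" using Dz that by (intro sum.neutral) auto
    ultimately show ?thesis using sum_split4[OF pN, of "D i"] by simp
  qed
  have diff: "(\<Sum>i<N. \<Sum>j<N. tau s a i j) - (\<Sum>i<N. \<Sum>j<N. tau s' a' i j) = (\<Sum>i<N. \<Sum>j<N. D i j)"
    unfolding D_def by (simp add: sum_subtractf)
  define t1 where "t1 = a p - nn - 1"
  define t2 where "t2 = a p + mm"
  have pre: "D k p + D k (Suc p) + D p k + D (Suc p) k = - cov a t1 k" if "k < p" for k
  proof -
    have k: "k \<noteq> p" "k \<noteq> Suc p" "Suc k \<noteq> Suc p" "k < N" using that pN by auto
    have ak: "a (Suc k) = (if s k then a k + mm else a k - nn)" using astep k by simp
    show ?thesis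
      unfolding D_def tau_def cov_def t1_def
      using that k sp ak a1 a2 ap mpos npos by (cases "s k") (auto simp: ss aa)
  qed
  have suf: "D k p + D k (Suc p) + D p k + D (Suc p) k = - cov a t2 k" if "Suc (Suc p) \<le> k" "k < N" for k
  proof -
    have k: "k \<noteq> p" "k \<noteq> Suc p" "Suc k \<noteq> Suc p" using that by auto
    have ak: "a (Suc k) = (if s k then a k + mm else a k - nn)" using astep that by simp
    show ?thesis
      unfolding D_def tau_def cov_def t2_def
      using that k sp ak a1 a2 ap mpos npos by (cases "s k") (auto simp: ss aa)
  qed
  have mid: "D p p + D p (Suc p) + D (Suc p) p + D (Suc p) (Suc p) = 1"
    unfolding D_def tau_def using sp a1 a2 ap mpos npos by (simp add: aa)
  have "(\<Sum>i<N. \<Sum>j<N. D i j)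
     = (\<Sum>i<p. \<Sum>j<N. D i j) + (\<Sum>j<N. D p j) + (\<Sum>j<N. D (Suc p) j) + (\<Sum>i = Suc (Suc p)..<N. \<Sum>j<N. D i j)"
    by (rule sum_split4[OF pN])
  also have "(\<Sum>i<p. \<Sum>j<N. D i j) = (\<Sum>i<p. D i p + D i (Suc p))" using row by (intro sum.cong) auto
  also have "(\<Sum>i = Suc (Suc p)..<N. \<Sum>j<N. D i j) = (\<Sum>i = Suc (Suc p)..<N. D i p + D i (Suc p))" using row by (intro sum.cong) auto
  also have "(\<Sum>j<N. D p j) = (\<Sum>j<p. D p j) + D p p + D p (Suc p) + (\<Sum>j = Suc (Suc p)..<N. D p j)"
    by (rule sum_split4[OF pN])
  also have "(\<Sum>j<N. D (Suc p) j) = (\<Sum>j<p. D (Suc p) j) + D (Suc p) p + D (Suc p) (Suc p) + (\<Sum>j = Suc (Suc p)..<N. D (Suc p) j)"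
    by (rule sum_split4[OF pN])
  finally have "(\<Sum>i<N. \<Sum>j<N. D i j) =
      (\<Sum>k<p. D k p + D k (Suc p) + D p k + D (Suc p) k)
    + (D p p + D p (Suc p) + D (Suc p) p + D (Suc p) (Suc p))
    + (\<Sum>k = Suc (Suc p)..<N. D k p + D k (Suc p) + D p k + D (Suc p) k)"
    by (simp add: sum.distrib algebra_simps)
  also have "(\<Sum>k<p. D k p + D k (Suc p) + D p k + D (Suc p) k) = (\<Sum>k<p. - cov a t1 k)"
    using pre by (intro sum.cong) auto
  also have "\<dots> = - (\<Sum>k = 0..<p. cov a t1 k)" by (simp add: sum_negf atLeast0LessThan)
  also have "\<dots> = -1" using cov_tele[of 0 p a t1] a0 L1 npos by (simp add: t1_def)
  also have "(\<Sum>k = Suc (Suc p)..<N. D k p + D k (Suc p) + D p k + D (Suc p) k) = (\<Sum>k = Suc (Suc p)..<N. - cov a t2 k)"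
    using suf by (intro sum.cong) auto
  also have "\<dots> = - (\<Sum>k = Suc (Suc p)..<N. cov a t2 k)" by (simp add: sum_negf)
  also have "\<dots> = 0" using cov_tele[OF pN, of a t2] aN a2 npos by (simp add: t2_def)
  finally have "(\<Sum>i<N. \<Sum>j<N. D i j) = 0" using mid by simp
  then show ?thesis using diff by simp
qed

definition Qs :: "nat \<Rightarrow> nat \<Rightarrow> bool list \<Rightarrow> (nat \<times> nat) set" where
  "Qs m n w = {(i,j). i \<in> hsteps w \<and> j \<in> vsteps w \<and>
     ((i < j \<and> lv m n w j \<le> lv m n w i) \<or> (j < i \<and> lv m n w (Suc j) < lv m n w (Suc i)))}"

definition TT :: "nat \<Rightarrow> nat \<Rightarrow> bool list \<Rightarrow> int" where
  "TT m n w = (\<Sum>i<length w. \<Sum>j<length w. tau (\<lambda>k. w!k) (lv m n w) i j)"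

lemma card_Qs: "int (card (Qs m n w)) = TT m n w"
proof -
  let ?N = "length w"
  let ?P = "\<lambda>i j. \<not> w!i \<and> w!j \<and> ((i < j \<and> lv m n w j \<le> lv m n w i) \<or> (j < i \<and> lv m n w (Suc j) < lv m n w (Suc i)))"
  have "Qs m n w = Sigma {..<?N} (\<lambda>i. {j \<in> {..<?N}. ?P i j})"
    unfolding Qs_def hsteps_def vsteps_def by auto
  then have "card (Qs m n w) = (\<Sum>i<?N. card {j \<in> {..<?N}. ?P i j})"
    by (simp add: card_SigmaI)
  also have "\<dots> = (\<Sum>i<?N. \<Sum>j<?N. if ?P i j then 1 else 0)"
    using card_filter_sum[of "{..<?N}"] by simp
  finally have "int (card (Qs m n w)) = (\<Sum>i<?N. \<Sum>j<?N. int (if ?P i j then 1 else 0))"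
    by (simp add: of_nat_sum)
  also have "\<dots> = TT m n w" unfolding TT_def tau_def by (intro sum.cong refl) auto
  finally show ?thesis .
qed

fun mu :: "bool list \<Rightarrow> nat" where
  "mu [] = 0"
| "mu (x # xs) = (if x then 0 else length (filter id xs)) + mu xs"

lemma mu_swap: "mu (u @ False # True # z) = Suc (mu (u @ True # False # z))"
  by (induction u) auto

lemma no_FT:
  assumes "\<not> (\<exists>u z. w = u @ False # True # z)"
  shows "w = replicate (length (filter id w)) True @ replicate (length (filter Not w)) False"
  using assms
proof (induction w)
  case Nil then show ?case by simp
next
  case (Cons x xs)
  have nxs: "\<not> (\<exists>u z. xs = u @ False # True # z)"
  proof
    assume "\<exists>u z. xs = u @ False # True # z"
    then obtain u z where "xs = u @ False # True # z" by blast
    then have "x # xs = (x # u) @ False # True # z" by simp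
    then show False using Cons.prems by blast
  qed
  have IH: "xs = replicate (length (filter id xs)) True @ replicate (length (filter Not xs)) False"
    using Cons.IH[OF nxs] .
  show ?case
  proof (cases x)
    case True
    have e1: "length (filter id (x#xs)) = Suc (length (filter id xs))" using True by simp
    have e2: "length (filter Not (x#xs)) = length (filter Not xs)" using True by simp
    have "x # xs = True # xs" using True by simp
    also have "\<dots> = True # (replicate (length (filter id xs)) True @ replicate (length (filter Not xs)) False)"
      using IH by (rule arg_cong)
    also have "\<dots> = replicate (Suc (length (filter id xs))) True @ replicate (length (filter Not xs)) False"
      by simp
    finally show ?thesis unfolding e1 e2 .
  next
    case False
    have "length (filter id xs) = 0"
    proof (rule ccontr)
      assume "length (filter id xs) \<noteq> 0"
      then obtain c where c: "length (filter id xs) = Suc c" by (cases "length (filter id xs)") auto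
      have xs1: "xs = replicate (Suc c) True @ replicate (length (filter Not xs)) False"
        by (rule trans[OF IH]) (simp only: c)
      have "x # xs = [] @ False # True # (replicate c True @ replicate (length (filter Not xs)) False)"
        using False by (subst xs1) simp
      then show False using Cons.prems by blast
    qed
    then have xs0: "xs = replicate (length (filter Not xs)) False" by (intro trans[OF IH]) simp
    have e1: "length (filter id (x#xs)) = 0" using False \<open>length (filter id xs) = 0\<close> by simp
    have e2: "length (filter Not (x#xs)) = Suc (length (filter Not xs))" using False by simp
    have "x # xs = False # replicate (length (filter Not xs)) False" using False by (subst xs0) simp
    then show ?thesis unfolding e1 e2 by simp
  qed
qed

lemma swap_nth:
  assumes "k \<noteq> length u" "k \<noteq> Suc (length u)"
  shows "(u @ False # True # z) ! k = (u @ True # False # z) ! k"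
proof (cases "k < length u")
  case True then show ?thesis by (simp add: nth_append)
next
  case False
  then obtain d where d: "k = length u + Suc (Suc d)" using assms
    by (metis add_Suc_right less_imp_Suc_add linorder_neqE_nat not_less_eq)
  then show ?thesis by (simp add: nth_append)
qed

lemma swap_vertex:
  assumes "k \<noteq> Suc (length u)"
  shows "vertex (u @ False # True # z) k = vertex (u @ True # False # z) k"
proof (cases "k \<le> length u")
  case True then show ?thesis by (simp add: vertex_def)
next
  case False
  then obtain d where d: "k = length u + Suc (Suc d)" using assms
    by (metis add_Suc_right less_imp_Suc_add linorder_neqE_nat not_less_eq not_le)
  then show ?thesis by (simp add: vertex_def)
qed

lemma dyck_iff_lv:
  "dyck_path m n w \<longleftrightarrow> length (filter Not w) = m \<and> length (filter id w) = n \<and>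
     (\<forall>j \<le> length w. 0 \<le> lv m n w j)"
  unfolding dyck_path_def lv_def by auto

lemma swap_facts:
  fixes u z :: "bool list"
  defines "w \<equiv> u @ False # True # z" and "w' \<equiv> u @ True # False # z"
  assumes d: "dyck_path m n w"
  shows "dyck_path m n w'" and "length w' = length w"
    and "\<And>k. k \<noteq> Suc (length u) \<Longrightarrow> lv m n w' k = lv m n w k"
    and "lv m n w' (Suc (length u)) = lv m n w (length u) + int m"
proof -
  show len: "length w' = length w" unfolding w_def w'_def by simp
  show aa: "\<And>k. k \<noteq> Suc (length u) \<Longrightarrow> lv m n w' k = lv m n w k"
    unfolding w_def w'_def lv_def using swap_vertex by metis
  have "length u < length w'" unfolding w'_def by simp
  moreover have "w' ! length u" unfolding w'_def by simp
  ultimately show ap: "lv m n w' (Suc (length u)) = lv m n w (length u) + int m"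
    using lv_Suc[of "length u" w' m n] aa[of "length u"] by simp
  have c1: "length (filter Not w') = length (filter Not w)" unfolding w_def w'_def by simp
  have c2: "length (filter id w') = length (filter id w)" unfolding w_def w'_def by simp
  have "\<forall>j \<le> length w'. 0 \<le> lv m n w' j"
  proof (intro allI impI)
    fix j assume "j \<le> length w'"
    show "0 \<le> lv m n w' j"
    proof (cases "j = Suc (length u)")
      case True then show ?thesis using ap dyck_lv_nonneg[OF d, of "length u"] by simp
    next
      case False then show ?thesis using aa dyck_lv_nonneg[OF d, of j] by simp
    qed
  qed
  then show "dyck_path m n w'" using d c1 c2 unfolding dyck_iff_lv by simp
qed

lemma swap_TT:
  fixes u z :: "bool list"
  defines "w \<equiv> u @ False # True # z" and "w' \<equiv> u @ True # False # z"
  assumes d: "dyck_path m n w" and cp: "coprime m n" and m0: "0 < m" and n0: "0 < n"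
  shows "TT m n w = TT m n w'"
proof -
  let ?p = "length u"
  note sf = swap_facts[where u=u and z=z and m=m and n=n, folded w_def w'_def, OF d]
  have pN: "Suc (Suc ?p) \<le> length w" unfolding w_def by simp
  have sp: "\<not> w ! ?p" "w ! Suc ?p" "w' ! ?p" "\<not> w' ! Suc ?p" unfolding w_def w'_def by (simp_all add: nth_append)
  have ss: "\<And>k. k \<noteq> ?p \<Longrightarrow> k \<noteq> Suc ?p \<Longrightarrow> w' ! k = w ! k"
    unfolding w_def w'_def using swap_nth by metis
  have astep: "\<And>k. k < length w \<Longrightarrow> lv m n w (Suc k) = (if w ! k then lv m n w k + int m else lv m n w k - int n)"
    by (rule lv_Suc)
  have a0: "lv m n w 0 = 0" by (simp add: lv_def)
  have a1: "lv m n w (Suc ?p) = lv m n w ?p - int n" using astep[of ?p] pN sp by simp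
  have "lv m n w (Suc ?p) \<noteq> 0"
  proof
    assume "lv m n w (Suc ?p) = 0"
    then have "Suc ?p = 0 \<or> Suc ?p = length w" using lv_zero[OF d cp m0 n0, of "Suc ?p"] pN by simp
    then show False using pN by simp
  qed
  then have L1: "1 \<le> lv m n w ?p - int n" using a1 dyck_lv_nonneg[OF d, of "Suc ?p"] by simp
  have "lv m n w (length w) = 0" using dyck_end[OF d] by (simp add: lv_def)
  then have aN: "lv m n w (length w) \<le> lv m n w ?p + int m" using dyck_lv_nonneg[OF d, of ?p] by simp
  have "(\<Sum>i<length w. \<Sum>j<length w. tau (\<lambda>k. w!k) (lv m n w) i j)
      = (\<Sum>i<length w. \<Sum>j<length w. tau (\<lambda>k. w'!k) (lv m n w') i j)"
    by (rule swap_T[where p = ?p and mm = "int m" and nn = "int n"])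
       (use pN sp ss sf(3,4) astep a0 L1 aN m0 n0 in auto)
  then show ?thesis unfolding TT_def using sf(2) by simp
qed

lemma TT_invariant:
  assumes "dyck_path m n w" "coprime m n" "0 < m" "0 < n"
  shows "TT m n w = TT m n (replicate n True @ replicate m False)"
  using assms(1)
proof (induction "mu w" arbitrary: w rule: less_induct)
  case less
  show ?case
  proof (cases "\<exists>u z. w = u @ False # True # z")
    case True
    then obtain u z where w: "w = u @ False # True # z" by blast
    have d': "dyck_path m n (u @ True # False # z)" using swap_facts(1)[where u=u and z=z and m=m and n=n] less.prems w by simp
    have "mu (u @ True # False # z) < mu w" using w mu_swap by simp
    then have "TT m n (u @ True # False # z) = TT m n (replicate n True @ replicate m False)"
      using less.hyps d' by blast
    moreover have "TT m n w = TT m n (u @ True # False # z)"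
      using swap_TT[where u=u and z=z and m=m and n=n] less.prems w assms(2-4) by simp
    ultimately show ?thesis by simp
  next
    case False
    have "w = replicate (length (filter id w)) True @ replicate (length (filter Not w)) False"
      using no_FT[OF False] .
    moreover have "length (filter id w) = n" "length (filter Not w) = m"
      using less.prems unfolding dyck_path_def by auto
    ultimately show ?thesis by simp
  qed
qed

lemma grid_count:
  assumes "coprime m n" "0 < m" "0 < n"
  shows "2 * card {(x,b). x < m \<and> b < n \<and> int m * int (b+1) + int n * int (x+1) < int m * int n} = (m-1)*(n-1)"
proof -
  define S1 where "S1 = {(x,b). x < m \<and> b < n \<and> int m * int (b+1) + int n * int (x+1) < int m * int n}"
  define G where "G = {..<m-1} \<times> {..<n-1}"
  define S2 where "S2 = {(x,b). (x,b) \<in> G \<and> int m * int n < int m * int (b+1) + int n * int (x+1)}"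
  define f where "f = (\<lambda>(x::nat,b::nat). (m - 2 - x, n - 2 - b))"
  have S1G: "S1 \<subseteq> G"
  proof
    fix p assume "p \<in> S1"
    then obtain x b where p: "p = (x,b)" "x < m" "b < n" and c: "int m * int (b+1) + int n * int (x+1) < int m * int n"
      unfolding S1_def by blast
    have "x \<noteq> m - 1"
    proof
      assume "x = m - 1"
      then have "x + 1 = m" using assms(2) by simp
      then have "int n * int (x+1) = int m * int n" by (simp add: mult.commute)
      moreover have "0 \<le> int m * int (b+1)" by simp
      ultimately show False using c by linarith
    qed
    moreover have "b \<noteq> n - 1"
    proof
      assume "b = n - 1"
      then have "b + 1 = n" using assms(3) by simp
      then have "int m * int (b+1) = int m * int n" by simp
      moreover have "0 \<le> int n * int (x+1)" by simp
      ultimately show False using c by linarith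
    qed
    ultimately have "x < m - 1" "b < n - 1" using p by auto
    then show "p \<in> G" using p unfolding G_def by simp
  qed
  have noeq: "int m * int (b+1) + int n * int (x+1) \<noteq> int m * int n" if "x < m - 1" for x b
  proof
    assume e: "int m * int (b+1) + int n * int (x+1) = int m * int n"
    then have e2: "int n * int (x+1) = int m * (int n - int (b+1))" by (simp add: algebra_simps)
    have "int m dvd int m * (int n - int (b+1))" by (rule dvd_triv_left)
    then have "int m dvd int n * int (x+1)" by (simp only: e2)
    then have "int m dvd int (x+1)" using coprime_dvd_int assms(1) by blast
    then have "m dvd x + 1" by (simp only: int_dvd_int_iff)
    moreover have "0 < x + 1" "x + 1 < m" using that by auto
    ultimately show False using nat_dvd_not_less[of "x+1" m] by simp
  qed
  have G12: "G = S1 \<union> S2"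
  proof
    show "G \<subseteq> S1 \<union> S2"
    proof
      fix p assume pG: "p \<in> G"
      then obtain x b where p: "p = (x,b)" "x < m - 1" "b < n - 1" unfolding G_def by blast
      then show "p \<in> S1 \<union> S2" using noeq[of x b] pG unfolding S1_def S2_def
        by (cases "int m * int (b+1) + int n * int (x+1) < int m * int n") auto
    qed
    show "S1 \<union> S2 \<subseteq> G" using S1G unfolding S2_def by auto
  qed
  have disj: "S1 \<inter> S2 = {}" unfolding S1_def S2_def by auto
  have finG: "finite G" unfolding G_def by simp
  have fin1: "finite S1" and fin2: "finite S2" using finG G12 by (auto intro: finite_subset)
  have key: "int m * int (b'+1) + int n * int (x'+1) = 2 * (int m * int n) - (int m * int (b+1) + int n * int (x+1))"
    if "x < m - 1" "b < n - 1" "x' = m - 2 - x" "b' = n - 2 - b" for x b x' b'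
  proof -
    have e1: "int (x'+1) = int m - int (x+1)" using that by (simp add: of_nat_diff)
    have e2: "int (b'+1) = int n - int (b+1)" using that by (simp add: of_nat_diff)
    show ?thesis by (simp only: e1 e2) (simp add: algebra_simps)
  qed
  have f12: "f ` S1 \<subseteq> S2"
  proof
    fix q assume "q \<in> f ` S1"
    then obtain x b where xb: "(x,b) \<in> S1" "q = f (x,b)" by fastforce
    have g: "x < m - 1" "b < n - 1" using S1G xb(1) unfolding G_def by auto
    have c: "int m * int (b+1) + int n * int (x+1) < int m * int n" using xb(1) unfolding S1_def by auto
    have "q = (m - 2 - x, n - 2 - b)" using xb(2) unfolding f_def by simp
    moreover have "(m - 2 - x, n - 2 - b) \<in> G" using g unfolding G_def by auto
    ultimately show "q \<in> S2" using key[OF g refl refl] c unfolding S2_def by auto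
  qed
  have f21: "f ` S2 \<subseteq> S1"
  proof
    fix q assume "q \<in> f ` S2"
    then obtain x b where xb: "(x,b) \<in> S2" "q = f (x,b)" by fastforce
    have g: "x < m - 1" "b < n - 1" using xb(1) unfolding S2_def G_def by auto
    have c: "int m * int n < int m * int (b+1) + int n * int (x+1)" using xb(1) unfolding S2_def by auto
    have "q = (m - 2 - x, n - 2 - b)" using xb(2) unfolding f_def by simp
    moreover have "m - 2 - x < m" "n - 2 - b < n" using g by auto
    ultimately show "q \<in> S1" using key[OF g refl refl] c unfolding S1_def by auto
  qed
  have finj: "inj_on f G"
  proof (rule inj_onI)
    fix p q assume "p \<in> G" "q \<in> G" "f p = f q"
    then show "p = q" unfolding G_def f_def by (cases p, cases q) auto
  qed
  have "card S1 \<le> card S2" using card_inj_on_le[OF inj_on_subset[OF finj S1G] f12 fin2] .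
  moreover have "card S2 \<le> card S1" using card_inj_on_le[OF inj_on_subset[OF finj] f21 fin1] G12 by blast
  ultimately have "card S1 = card S2" by simp
  moreover have "card G = card S1 + card S2" using G12 disj fin1 fin2 by (simp add: card_Un_disjoint)
  moreover have "card G = (m-1)*(n-1)" unfolding G_def by (simp add: card_cartesian_product)
  ultimately show ?thesis unfolding S1_def by simp
qed

lemma w0_vertex:
  assumes "k \<le> n + m"
  shows "vertex (replicate n True @ replicate m False) k = (int (k - n), int (min k n))"
proof -
  have km: "k - n \<le> m" using assms by linarith
  have "take k (replicate n True @ replicate m False) = replicate (min k n) True @ replicate (k - n) False"
    using km by (simp add: min_absorb1)
  then show ?thesis by (simp add: vertex_def)
qed

lemma Qs_w0:
  "Qs m n (replicate n True @ replicate m False) =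
     (\<lambda>(x,b). (n + x, b)) ` {(x,b). x < m \<and> b < n \<and> int m * int (b+1) + int n * int (x+1) < int m * int n}"
  (is "Qs m n ?w = ?f ` ?S")
proof -
  have nth: "?w ! k = (k < n)" if "k < n + m" for k using that by (simp add: nth_append)
  have lvf: "lv m n ?w k = int m * int (min k n) - int n * int (k - n)" if "k \<le> n + m" for k
    using w0_vertex[OF that] by (simp add: lv_def)
  show ?thesis
  proof (intro set_eqI iffI)
    fix p assume "p \<in> Qs m n ?w"
    then obtain i j where p: "p = (i,j)" and i: "i \<in> hsteps ?w" and j: "j \<in> vsteps ?w"
      and c: "(i < j \<and> lv m n ?w j \<le> lv m n ?w i) \<or> (j < i \<and> lv m n ?w (Suc j) < lv m n ?w (Suc i))"
      unfolding Qs_def by blast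
    have il: "i < n + m" "n \<le> i" using i nth unfolding hsteps_def by auto
    have jl: "j < n" using j nth unfolding vsteps_def by (auto simp: add.commute)
    have ji: "j < i" using il jl by simp
    then have "lv m n ?w (Suc j) < lv m n ?w (Suc i)" using c by auto
    then have "int m * int (Suc j) < int m * int n - int n * int (Suc i - n)"
      using lvf[of "Suc j"] lvf[of "Suc i"] il jl by (simp add: min_def)
    moreover have "int (Suc i - n) = int (i - n) + 1" using il by simp
    ultimately have "int m * int (j+1) + int n * int ((i - n)+1) < int m * int n" by (simp add: algebra_simps)
    then have "(i - n, j) \<in> ?S" using il jl by auto
    moreover have "p = ?f (i - n, j)" using p il by simp
    ultimately show "p \<in> ?f ` ?S" by blast
  next
    fix p assume "p \<in> ?f ` ?S"
    then obtain x b where p: "p = (n + x, b)" and xb: "x < m" "b < n"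
      and c: "int m * int (b+1) + int n * int (x+1) < int m * int n" by fastforce
    have h: "n + x \<in> hsteps ?w" using xb nth[of "n+x"] unfolding hsteps_def by simp
    have v: "b \<in> vsteps ?w" using xb nth[of b] unfolding vsteps_def by simp
    have "lv m n ?w (Suc b) = int m * int (b+1)" using lvf[of "Suc b"] xb by (simp add: min_def)
    moreover have "lv m n ?w (Suc (n + x)) = int m * int n - int n * int (x+1)" using lvf[of "Suc (n+x)"] xb by (simp add: min_def)
    ultimately have "lv m n ?w (Suc b) < lv m n ?w (Suc (n + x))" using c by simp
    then show "p \<in> Qs m n ?w" using h v xb p unfolding Qs_def by auto
  qed
qed

lemma card_Qs_w0:
  assumes "coprime m n" "0 < m" "0 < n"
  shows "2 * card (Qs m n (replicate n True @ replicate m False)) = (m-1)*(n-1)"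
proof -
  have "inj_on (\<lambda>(x,b). (n + x, b)) {(x,b). x < m \<and> b < n \<and> int m * int (b+1) + int n * int (x+1) < int m * int n}"
    by (rule inj_onI) auto
  then show ?thesis unfolding Qs_w0 using grid_count[OF assms] by (simp add: card_image)
qed

lemma Qs_split:
  assumes "0 < m" "0 < n"
  shows "card (Qs m n w) = card {(i,j). i \<in> hsteps w \<and> j \<in> vsteps w \<and> i < j \<and>
            lv m n w (Suc i) \<le> lv m n w j + int m \<and> lv m n w j \<le> lv m n w i}
     + card {(i,j). i \<in> hsteps w \<and> j \<in> vsteps w \<and> lv m n w j + int m < lv m n w (Suc i)}"
proof -
  let ?E = "{(i,j). i \<in> hsteps w \<and> j \<in> vsteps w \<and> i < j \<and>
            lv m n w (Suc i) \<le> lv m n w j + int m \<and> lv m n w j \<le> lv m n w i}"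
  let ?B = "{(i,j). i \<in> hsteps w \<and> j \<in> vsteps w \<and> lv m n w j + int m < lv m n w (Suc i)}"
  have fin: "finite (hsteps w \<times> vsteps w)" by (simp add: finite_hsteps finite_vsteps)
  have "Qs m n w = ?E \<union> ?B"
  proof (intro set_eqI iffI)
    fix p assume "p \<in> Qs m n w"
    then obtain i j where p: "p = (i,j)" and i: "i \<in> hsteps w" and j: "j \<in> vsteps w"
      and c: "(i < j \<and> lv m n w j \<le> lv m n w i) \<or> (j < i \<and> lv m n w (Suc j) < lv m n w (Suc i))"
      unfolding Qs_def by blast
    have il: "i < length w" "\<not> w!i" using i by (auto simp: hsteps_def)
    have jl: "j < length w" "w!j" using j by (auto simp: vsteps_def)
    have li: "lv m n w (Suc i) = lv m n w i - int n" using lv_Suc[OF il(1)] il(2) by simp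
    have lj: "lv m n w (Suc j) = lv m n w j + int m" using lv_Suc[OF jl(1)] jl(2) by simp
    show "p \<in> ?E \<union> ?B" using c li lj p i j by auto
  next
    fix p assume "p \<in> ?E \<union> ?B"
    then obtain i j where p: "p = (i,j)" and i: "i \<in> hsteps w" and j: "j \<in> vsteps w"
      and c: "(i < j \<and> lv m n w (Suc i) \<le> lv m n w j + int m \<and> lv m n w j \<le> lv m n w i) \<or> lv m n w j + int m < lv m n w (Suc i)"
      by blast
    have il: "i < length w" "\<not> w!i" using i by (auto simp: hsteps_def)
    have jl: "j < length w" "w!j" using j by (auto simp: vsteps_def)
    have ij: "i \<noteq> j" using il jl by auto
    have li: "lv m n w (Suc i) = lv m n w i - int n" using lv_Suc[OF il(1)] il(2) by simp
    have lj: "lv m n w (Suc j) = lv m n w j + int m" using lv_Suc[OF jl(1)] jl(2) by simp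
    have "(i < j \<and> lv m n w j \<le> lv m n w i) \<or> (j < i \<and> lv m n w (Suc j) < lv m n w (Suc i))"
      using c li lj ij assms by (cases "i < j") auto
    then show "p \<in> Qs m n w" using p i j unfolding Qs_def by blast
  qed
  moreover have "?E \<inter> ?B = {}" by auto
  moreover have "finite ?E" by (rule finite_subset[OF _ fin]) auto
  moreover have "finite ?B" by (rule finite_subset[OF _ fin]) auto
  ultimately show ?thesis by (simp add: card_Un_disjoint)
qed

theorem mainTheorem3:
  fixes m n :: nat and w :: "bool list"
  assumes "0 < m" and "0 < n" and "coprime m n" and "dyck_path m n w"
  shows "real ((m - 1) * (n - 1)) / 2
           = real (h_plus m n w) + (\<Sum>p\<in>interior_pts m n w. real (kval m n w p))"
proof -
  have "int (card (Qs m n w)) = TT m n w" by (rule card_Qs)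
  also have "\<dots> = TT m n (replicate n True @ replicate m False)"
    using TT_invariant[OF assms(4,3,1,2)] .
  also have "\<dots> = int (card (Qs m n (replicate n True @ replicate m False)))" by (rule card_Qs[symmetric])
  finally have "card (Qs m n w) = card (Qs m n (replicate n True @ replicate m False))" by simp
  then have two: "2 * card (Qs m n w) = (m-1)*(n-1)" using card_Qs_w0[OF assms(3,1,2)] by simp
  have "(\<Sum>p\<in>interior_pts m n w. real (kval m n w p)) = real (\<Sum>p\<in>interior_pts m n w. kval m n w p)"
    by (simp add: of_nat_sum)
  also have "\<dots> = real (card {(i,j). i \<in> hsteps w \<and> j \<in> vsteps w \<and> lv m n w j + int m < lv m n w (Suc i)})"
    using sum_kval[OF assms(4,3,1,2)] by simp
  finally have sk: "(\<Sum>p\<in>interior_pts m n w. real (kval m n w p)) = real (card {(i,j). i \<in> hsteps w \<and> j \<in> vsteps w \<and> lv m n w j + int m < lv m n w (Suc i)})" .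
  have "real ((m - 1) * (n - 1)) = real (2 * card (Qs m n w))" using two by simp
  also have "\<dots> = 2 * (real (h_plus m n w) + real (card {(i,j). i \<in> hsteps w \<and> j \<in> vsteps w \<and> lv m n w j + int m < lv m n w (Suc i)}))"
    using Qs_split[OF assms(1,2), of w] h_plus_eq[OF assms(1,2), of w] by simp
  finally show ?thesis using sk by simp
qed

end
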